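(* Let $b\in\mathbb{C}\setminus\{0,1\}$, let $\mu\ge 0$ be an integer, and let \[ W_\mu=\operatorname{span}_{\mathbb{C}}\{r_1(z),\dots,r_\mu(z)\}\oplus H_\mu \qquad(\text{so } W_0=H_0), \] where $r_i(z)=z^{-i}\big(b\,e^{z}+(1-b)\sum_{j=0}^{i-1}z^j/j!\big)$. Then $W_\mu\in Gr^{(0)}(H)$, $W_\mu$ satisfies the CKP condition, i.e. $\operatorname{Res}_z f(z)g(-z)=0$ for all $f,g\in W_\mu$, and \[ W_\mu=\{\,f(z)\in H_{-\mu}\;:\;\operatorname{Res}_z f(z)\,r_i(-z)=0\ \text{ for } 1\le i\le \mu\,\}. \]
   Context: Work in $H=\mathbb{C}((z))$, formal Laurent series in $z$ with finitely many negative powers, with $e^z=\sum_{k\ge0}z^k/k!$. For $k\in\mathbb{Z}$, $H_k=z^k\mathbb{C}[[z]]$ (series whose lowest power is at least $k$). The bilinear form on $H$ is $(f,g)=\operatorname{Res}_z f(z)g(z)$ (coefficient of $z^{-1}$). $Gr(H)$ is the set of linear subspaces $W\subset H$ with $H_k\subset W\subset H_\ell$ for some integers $k>\ell$; $Gr^{(j)}(H)$ consists of those $W\in Gr(H)$ with $j=k-\dim(W/H_k)$ whenever $H_k\subset W$. *)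

theory Defs
  imports Complex_Main "HOL-Computational_Algebra.Formal_Laurent_Series"
begin

text \<open>H = C((z)) is modelled by the type complex fls.  Scalar multiplication
  by c is multiplication by the constant series fls_const c.\<close>

definition Hk :: "int \<Rightarrow> complex fls set" where
  "Hk k = {f. \<forall>n<k. fls_nth f n = 0}"

definition fls_exp_z :: "complex fls" where
  "fls_exp_z = fps_to_fls (fps_exp 1)"

definition res_pair :: "complex fls \<Rightarrow> complex fls \<Rightarrow> complex" where
  "res_pair f g = fls_residue (f * g)"

definition neg_z :: "complex fls \<Rightarrow> complex fls" where
  "neg_z f = fls_compose_fps f (- fps_X)"

definition is_lin_subspace :: "complex fls set \<Rightarrow> bool" where
  "is_lin_subspace W \<longleftrightarrow> 0 \<in> W \<and> (\<forall>f\<in>W. \<forall>g\<in>W. f + g \<in> W)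
     \<and> (\<forall>c. \<forall>f\<in>W. fls_const c * f \<in> W)"

definition quot_dim :: "complex fls set \<Rightarrow> complex fls set \<Rightarrow> nat" where
  "quot_dim W U = (LEAST n. \<exists>v :: nat \<Rightarrow> complex fls. (\<forall>i<n. v i \<in> W) \<and>
      W \<subseteq> {(\<Sum>i<n. fls_const (c i) * v i) + u | c u. u \<in> U})"

definition Gr :: "complex fls set set" where
  "Gr = {W. is_lin_subspace W \<and> (\<exists>k l. k > l \<and> Hk k \<subseteq> W \<and> W \<subseteq> Hk l)}"

definition Gr_j :: "int \<Rightarrow> complex fls set set" where
  "Gr_j j = {W \<in> Gr. \<forall>k. Hk k \<subseteq> W \<longrightarrow> j = k - int (quot_dim W (Hk k))}"

definition CKP :: "complex fls set \<Rightarrow> bool" where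
  "CKP W \<longleftrightarrow> (\<forall>f\<in>W. \<forall>g\<in>W. fls_residue (f * neg_z g) = 0)"

definition r_fun :: "complex \<Rightarrow> nat \<Rightarrow> complex fls" where
  "r_fun b i = fls_X_intpow (- int i) *
     (fls_const b * fls_exp_z
      + fls_const (1 - b) * (\<Sum>j<i. fls_const (1 / of_nat (fact j)) * fls_X ^ j))"

definition W_mu :: "complex \<Rightarrow> nat \<Rightarrow> complex fls set" where
  "W_mu b \<mu> = {(\<Sum>i\<in>{1..\<mu>}. fls_const (c i) * r_fun b i) + h | c h. h \<in> Hk (int \<mu>)}"

end

theory Submission
  imports Defs
begin
unbundle fps_syntax

lemma X_intpow_nth: "(fls_X_intpow i :: complex fls) $$ n = (if n = i then 1 else 0)"
  by simp

lemma exp_nth: "fls_exp_z $$ n = (if n < 0 then 0 else 1 / fact (nat n))"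
  by (simp add: fls_exp_z_def fps_exp_def)

lemma psum_nth: "(\<Sum>j<i. fls_const (1 / of_nat (fact j)) * fls_X ^ j :: complex fls) $$ t
   = (if 0 \<le> t \<and> t < int i then 1 / fact (nat t) else 0)"
proof (cases "t \<ge> 0")
  case True
  then obtain m where m: "t = int m" by (metis nonneg_eq_int)
  have "(\<Sum>j<i. fls_const (1 / of_nat (fact j)) * fls_X ^ j :: complex fls) $$ t
     = (\<Sum>j<i. (if j = m then 1 / of_nat (fact j) else 0))"
    unfolding fls_nth_sum m by (intro sum.cong) auto
  also have "\<dots> = (if m < i then 1 / fact m else 0)" by (simp add: sum.delta')
  finally show ?thesis using m by simp
next
  case False
  then show ?thesis unfolding fls_nth_sum by (auto intro!: sum.neutral)
qed

lemma r_nth: "r_fun b i $$ n = (if n < - int i then 0 else if n < 0 then 1 / fact (nat (n + int i))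
   else b / fact (nat (n + int i)))"
proof -
  have "r_fun b i $$ n = b * fls_exp_z $$ (n + int i) + (1 - b) *
     (\<Sum>j<i. fls_const (1 / of_nat (fact j)) * fls_X ^ j :: complex fls) $$ (n + int i)"
    unfolding r_fun_def fls_X_intpow_times_conv_shift fls_shift_nth
    by (simp only: fls_plus_nth fls_mult_const_nth minus_minus)
  then show ?thesis unfolding exp_nth psum_nth by (auto simp: field_simps)
qed

lemma neg_z_nth: "neg_z f $$ n = f $$ n * (-1) powi n"
proof -
  have "- fps_X = fps_const (-1::complex) * fps_X" by simp
  then show ?thesis unfolding neg_z_def
    by (metis fls_nth_fls_compose_fps_linear mult.commute neg_equal_0_iff_equal one_neq_zero)
qed

lemma alt_sum: "N > 0 \<Longrightarrow> (\<Sum>m\<le>N. (-1)^m / (fact m * fact (N-m)) :: complex) = 0"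
proof -
  assume N: "N > 0"
  have "(\<Sum>m\<le>N. (-1)^m / (fact m * fact (N-m)) :: complex)
      = (\<Sum>m\<le>N. (-1)^m * of_nat (N choose m) / fact N)"
    by (intro sum.cong refl) (simp add: binomial_fact field_simps)
  also have "\<dots> = (\<Sum>m\<le>N. (-1)^m * of_nat (N choose m)) / fact N"
    by (simp add: sum_divide_distrib)
  also have "\<dots> = 0" using choose_alternating_sum[OF N] by simp
  finally show ?thesis .
qed

lemma times_nth_lb:
  fixes f g :: "complex fls"
  assumes f: "f \<in> Hk a" and g: "g \<in> Hk c"
  shows "(f * g) $$ n = (\<Sum>m=0..nat (n - a - c). f $$ (a + int m) * g $$ (n - a - int m))"
proof (cases "f = 0 \<or> g = 0")
  case True
  then show ?thesis by auto
next
  case False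
  have fz: "\<And>k. k < a \<Longrightarrow> f $$ k = 0" and gz: "\<And>k. k < c \<Longrightarrow> g $$ k = 0"
    using f g by (auto simp: Hk_def)
  have da: "a \<le> fls_subdegree f" using False fz by (intro fls_subdegree_geI) auto
  have dc: "c \<le> fls_subdegree g" using False gz by (intro fls_subdegree_geI) auto
  have "(f * g) $$ n = (\<Sum>i=fls_subdegree f..n - fls_subdegree g. f $$ i * g $$ (n - i))"
    by (rule fls_times_nth(2))
  also have "\<dots> = (\<Sum>i=a..n - c. f $$ i * g $$ (n - i))"
  proof (rule sum.mono_neutral_left)
    show "\<forall>i\<in>{a..n - c} - {fls_subdegree f..n - fls_subdegree g}. f $$ i * g $$ (n - i) = 0"
    proof
      fix i assume "i \<in> {a..n - c} - {fls_subdegree f..n - fls_subdegree g}"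
      then have "i < fls_subdegree f \<or> n - i < fls_subdegree g" by auto
      then show "f $$ i * g $$ (n - i) = 0" by (auto simp: nth_less_subdegree_zero)
    qed
  qed (use da dc in auto)
  also have "\<dots> = (\<Sum>m=0..nat (n - a - c). f $$ (a + int m) * g $$ (n - a - int m))"
  proof (cases "n - a - c \<ge> 0")
    case True
    show ?thesis
      by (rule sum.reindex_bij_witness[of _ "\<lambda>m. a + int m" "\<lambda>i. nat (i - a)"]) (use True in auto)
  next
    case False
    then have "{a..n-c} = {}" by auto
    moreover have "g $$ (n - a) = 0" using False gz by auto
    ultimately show ?thesis using False by simp
  qed
  finally show ?thesis .
qed

lemma r_in_Hk: "r_fun b i \<in> Hk (- int i)"
  by (auto simp: Hk_def r_nth)

lemma neg_z_Hk: "f \<in> Hk a \<Longrightarrow> neg_z f \<in> Hk a"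
  by (auto simp: Hk_def neg_z_nth)

lemma minus_one_powi: "(-1 :: complex) powi k = (if even k then 1 else -1)"
  by (simp add: power_int_minus_left)

lemma res_rr:
  assumes i: "i \<ge> 1" and j: "j \<ge> 1"
  shows "fls_residue (r_fun b i * neg_z (r_fun b j)) = 0"
proof -
  define N where "N = i + j - 1"
  have NN: "nat (-1 - (- int i) - (- int j)) = N" using i j by (simp add: N_def)
  have "fls_residue (r_fun b i * neg_z (r_fun b j))
     = (\<Sum>m=0..N. r_fun b i $$ (- int i + int m) * neg_z (r_fun b j) $$ (-1 - (- int i) - int m))"
    unfolding fls_residue_def
    by (subst times_nth_lb[OF r_in_Hk neg_z_Hk[OF r_in_Hk]]) (simp only: NN)
  also have "\<dots> = (\<Sum>m=0..N. b * (-1)^(i+1) * ((-1)^m / (fact m * fact (N-m))))"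
  proof (intro sum.cong refl)
    fix m assume m: "m \<in> {0..N}"
    have e1: "nat (- int i + int m + int i) = m" by simp
    have e2: "nat (-1 - (- int i) - int m + int j) = N - m" using m i j by (auto simp: N_def)
    have e4: "nat (int i + int j - (1 + int m)) = i + j - Suc m" using m i j by (auto simp: N_def)
    have e3: "(-1::complex) powi (-1 - (- int i) - int m) = (-1)^(i+1) * (-1)^m"
      unfolding minus_one_powi by (auto simp: minus_one_power_iff)
    show "r_fun b i $$ (- int i + int m) * neg_z (r_fun b j) $$ (-1 - (- int i) - int m)
        = b * (-1)^(i+1) * ((-1)^m / (fact m * fact (N-m)))"
      unfolding neg_z_nth r_nth e3 using m i j
      by (auto simp: e1 e2 e4 N_def field_simps)
  qed
  also have "\<dots> = b * (-1)^(i+1) * (\<Sum>m\<le>N. (-1)^m / (fact m * fact (N-m)))"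
    by (simp add: sum_distrib_left atLeast0AtMost)
  also have "\<dots> = 0" using alt_sum[of N] i j by (simp add: N_def)
  finally show ?thesis .
qed

lemma Hk_add: "f \<in> Hk a \<Longrightarrow> g \<in> Hk a \<Longrightarrow> f + g \<in> Hk a"
  by (auto simp: Hk_def)
lemma Hk_diff: "f \<in> Hk a \<Longrightarrow> g \<in> Hk a \<Longrightarrow> f - g \<in> Hk a"
  by (auto simp: Hk_def)
lemma Hk_scale: "f \<in> Hk a \<Longrightarrow> fls_const c * f \<in> Hk a"
  by (auto simp: Hk_def)
lemma Hk_zero: "0 \<in> Hk a"
  by (auto simp: Hk_def)
lemma Hk_sum: "(\<And>i. i \<in> A \<Longrightarrow> f i \<in> Hk a) \<Longrightarrow> sum f A \<in> Hk a"
  by (auto simp: Hk_def fls_nth_sum intro!: sum.neutral)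
lemma Hk_mono: "a \<le> a' \<Longrightarrow> f \<in> Hk a' \<Longrightarrow> f \<in> Hk a"
  by (auto simp: Hk_def)
lemma Hk_mult: "f \<in> Hk a \<Longrightarrow> g \<in> Hk c \<Longrightarrow> f * g \<in> Hk (a + c)"
proof -
  assume f: "f \<in> Hk a" and g: "g \<in> Hk c"
  show ?thesis unfolding Hk_def
  proof (intro CollectI allI impI)
    fix n assume n: "n < a + c"
    then have "nat (n - a - c) = 0" by simp
    then have "(f * g) $$ n = f $$ a * g $$ (n - a)"
      by (simp add: times_nth_lb[OF f g])
    also have "g $$ (n - a) = 0" using g n by (auto simp: Hk_def)
    finally show "(f * g) $$ n = 0" by simp
  qed
qed
lemma X_in_Hk: "a \<le> j \<Longrightarrow> (fls_X_intpow j :: complex fls) \<in> Hk a"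
  by (auto simp: Hk_def)
lemma res_Hk0: "f \<in> Hk 0 \<Longrightarrow> fls_residue f = 0"
  by (auto simp: Hk_def)

lemma neg_z_add: "neg_z (f + g) = neg_z f + neg_z g"
  by (rule fls_eqI) (simp add: neg_z_nth algebra_simps)
lemma neg_z_diff: "neg_z (f - g) = neg_z f - neg_z g"
  by (rule fls_eqI) (simp add: neg_z_nth algebra_simps)
lemma neg_z_scale: "neg_z (fls_const c * f) = fls_const c * neg_z f"
  by (rule fls_eqI) (simp add: neg_z_nth algebra_simps)
lemma neg_z_sum: "neg_z (sum f A) = (\<Sum>i\<in>A. neg_z (f i))"
  by (rule fls_eqI) (simp add: neg_z_nth fls_nth_sum sum_distrib_right)

definition Sr :: "complex \<Rightarrow> nat \<Rightarrow> (nat \<Rightarrow> complex) \<Rightarrow> complex fls" where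
  "Sr b n c = (\<Sum>i\<in>{1..n}. fls_const (c i) * r_fun b i)"

lemma W_mu_alt: "W_mu b \<mu> = {Sr b \<mu> c + h | c h. h \<in> Hk (int \<mu>)}"
  by (simp add: W_mu_def Sr_def)

lemma Sr_in: "Sr b \<mu> c \<in> Hk (- int \<mu>)"
  unfolding Sr_def
  by (intro Hk_sum Hk_scale) (auto intro: Hk_mono[OF _ r_in_Hk])

lemma res_SS: "fls_residue (Sr b \<mu> c * neg_z (Sr b \<mu> d)) = 0"
proof -
  have "Sr b \<mu> c * neg_z (Sr b \<mu> d) =
     (\<Sum>i\<in>{1..\<mu>}. \<Sum>k\<in>{1..\<mu>}. fls_const (c i * d k) * (r_fun b i * neg_z (r_fun b k)))"
    unfolding Sr_def neg_z_sum neg_z_scale sum_product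
    by (intro sum.cong refl) (simp flip: fls_const_mult_const add: algebra_simps)
  moreover have "\<And>i k. i \<in> {1..\<mu>} \<Longrightarrow> k \<in> {1..\<mu>} \<Longrightarrow> (r_fun b i * neg_z (r_fun b k)) $$ (-1) = 0"
    using res_rr by simp
  ultimately show ?thesis
    by (simp add: fls_nth_sum)
qed

lemma W_CKP: assumes "f \<in> W_mu b \<mu>" "g \<in> W_mu b \<mu>"
  shows "fls_residue (f * neg_z g) = 0"
proof -
  obtain c h where f: "f = Sr b \<mu> c + h" and h: "h \<in> Hk (int \<mu>)" using assms(1) by (auto simp: W_mu_alt)
  obtain d h' where g: "g = Sr b \<mu> d + h'" and h': "h' \<in> Hk (int \<mu>)" using assms(2) by (auto simp: W_mu_alt)
  have 1: "Sr b \<mu> c * neg_z h' \<in> Hk 0" using Hk_mult[OF Sr_in[of b \<mu> c] neg_z_Hk[OF h']] by simp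
  have 2: "h * neg_z (Sr b \<mu> d) \<in> Hk 0" using Hk_mult[OF h neg_z_Hk[OF Sr_in[of b \<mu> d]]] by simp
  have 3: "h * neg_z h' \<in> Hk 0" using Hk_mult[OF h neg_z_Hk[OF h']] by (auto intro: Hk_mono[of 0 "2 * int \<mu>"])
  have "f * neg_z g = Sr b \<mu> c * neg_z (Sr b \<mu> d) + (Sr b \<mu> c * neg_z h' + h * neg_z (Sr b \<mu> d) + h * neg_z h')"
    unfolding f g neg_z_add by (simp add: algebra_simps)
  then have "fls_residue (f * neg_z g) = fls_residue (Sr b \<mu> c * neg_z (Sr b \<mu> d))
      + fls_residue (Sr b \<mu> c * neg_z h' + h * neg_z (Sr b \<mu> d) + h * neg_z h')"
    by (simp only: fls_residue_add)
  also have "\<dots> = 0" using res_SS res_Hk0[OF Hk_add[OF Hk_add[OF 1 2] 3]] by simp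
  finally show ?thesis .
qed

lemma exist_c: "f \<in> Hk (- int n) \<Longrightarrow> \<exists>c. f - Sr b n c \<in> Hk 0"
proof (induction n arbitrary: f)
  case 0
  then show ?case by (simp add: Sr_def)
next
  case (Suc n)
  define a where "a = f $$ (- int (Suc n))"
  define f' where "f' = f - fls_const a * r_fun b (Suc n)"
  have "f' \<in> Hk (- int n)" unfolding Hk_def
  proof (intro CollectI allI impI)
    fix t assume t: "t < - int n"
    show "f' $$ t = 0"
    proof (cases "t = - int (Suc n)")
      case True
      then show ?thesis by (simp add: f'_def a_def r_nth)
    next
      case False
      with t have "t < - int (Suc n)" by simp
      then show ?thesis using Suc.prems by (simp add: f'_def Hk_def r_nth)
    qed
  qed
  then obtain c' where c': "f' - Sr b n c' \<in> Hk 0" using Suc.IH by blast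
  define c where "c = c'(Suc n := a)"
  have "Sr b (Suc n) c = Sr b n c' + fls_const a * r_fun b (Suc n)"
    unfolding Sr_def c_def by (simp add: sum.cl_ivl_Suc)
  then have "f - Sr b (Suc n) c = f' - Sr b n c'" by (simp add: f'_def algebra_simps)
  with c' show ?case by metis
qed

lemma G_lemma:
  assumes g: "g \<in> Hk 0" and res: "\<forall>i\<in>{1..\<mu>}. fls_residue (g * neg_z (r_fun b i)) = 0"
  shows "g \<in> Hk (int \<mu>)"
proof -
  have "\<forall>l. l < \<mu> \<longrightarrow> g $$ int l = 0"
  proof (intro allI)
    fix l show "l < \<mu> \<longrightarrow> g $$ int l = 0"
    proof (induction l rule: less_induct)
      case (less l)
      show ?case
      proof
        assume l: "l < \<mu>"
        have "fls_residue (g * neg_z (r_fun b (Suc l))) =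
          (\<Sum>m=0..l. g $$ (0 + int m) * neg_z (r_fun b (Suc l)) $$ (-1 - 0 - int m))"
          unfolding fls_residue_def
          by (subst times_nth_lb[OF g neg_z_Hk[OF r_in_Hk]]) simp
        also have "\<dots> = (\<Sum>m\<in>{l}. g $$ (0 + int m) * neg_z (r_fun b (Suc l)) $$ (-1 - 0 - int m))"
          by (rule sum.mono_neutral_right) (use less l in auto)
        also have "\<dots> = g $$ int l * (-1) powi (-1 - int l)"
          by (simp add: neg_z_nth r_nth)
        finally have "g $$ int l * (-1) powi (-1 - int l) = 0" using res l by simp
        then show "g $$ int l = 0" by (simp add: minus_one_powi split: if_splits)
      qed
    qed
  qed
  then show ?thesis unfolding Hk_def
  proof (intro CollectI allI impI)
    fix n assume n: "n < int \<mu>"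
    show "g $$ n = 0"
    proof (cases "n < 0")
      case True then show ?thesis using g by (simp add: Hk_def)
    next
      case False
      then have "n = int (nat n)" "nat n < \<mu>" using n by auto
      then show ?thesis using \<open>\<forall>l. l < \<mu> \<longrightarrow> g $$ int l = 0\<close> by metis
    qed
  qed
qed

lemma res_r_lin: "fls_residue (f * neg_z (r_fun b i)) = 0 \<Longrightarrow> (\<forall>k\<in>{1..n}. fls_residue (r_fun b k * neg_z (r_fun b i)) = 0) \<Longrightarrow>
   fls_residue ((f - Sr b n c) * neg_z (r_fun b i)) = 0"
proof -
  assume a1: "fls_residue (f * neg_z (r_fun b i)) = 0"
    and a2: "\<forall>k\<in>{1..n}. fls_residue (r_fun b k * neg_z (r_fun b i)) = 0"
  have e: "(f - Sr b n c) * neg_z (r_fun b i) = f * neg_z (r_fun b i)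
     - (\<Sum>k\<in>{1..n}. fls_const (c k) * (r_fun b k * neg_z (r_fun b i)))"
    unfolding Sr_def left_diff_distrib sum_distrib_right by (simp add: mult.assoc)
  have "(\<Sum>k\<in>{1..n}. fls_const (c k) * (r_fun b k * neg_z (r_fun b i))) $$ (-1) = 0"
    unfolding fls_nth_sum using a2 by (intro sum.neutral) simp
  then show ?thesis unfolding e using a1 by simp
qed

lemma W_char: "W_mu b \<mu> = {f \<in> Hk (- int \<mu>). \<forall>i\<in>{1..\<mu>}. fls_residue (f * neg_z (r_fun b i)) = 0}"
proof (intro equalityI subsetI)
  fix f assume f: "f \<in> W_mu b \<mu>"
  then obtain c h where fe: "f = Sr b \<mu> c + h" and h: "h \<in> Hk (int \<mu>)" by (auto simp: W_mu_alt)
  have "f \<in> Hk (- int \<mu>)" unfolding fe by (rule Hk_add[OF Sr_in Hk_mono[OF _ h]]) simp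
  moreover have "r_fun b i \<in> W_mu b \<mu>" if "i \<in> {1..\<mu>}" for i
  proof -
    have "Sr b \<mu> (\<lambda>k. if k = i then 1 else 0) = r_fun b i"
    proof -
      have "\<And>k. fls_const (if k = i then 1 else 0) * r_fun b k = (if k = i then r_fun b k else 0)" by simp
      then show ?thesis unfolding Sr_def using that by (simp add: sum.delta)
    qed
    then have "r_fun b i = Sr b \<mu> (\<lambda>k. if k = i then 1 else 0) + 0 \<and> (0::complex fls) \<in> Hk (int \<mu>)"
      by (simp add: Hk_zero)
    then show ?thesis unfolding W_mu_alt by blast
  qed
  ultimately show "f \<in> {f \<in> Hk (- int \<mu>). \<forall>i\<in>{1..\<mu>}. fls_residue (f * neg_z (r_fun b i)) = 0}"
    using W_CKP[OF f] by auto
next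
  fix f assume "f \<in> {f \<in> Hk (- int \<mu>). \<forall>i\<in>{1..\<mu>}. fls_residue (f * neg_z (r_fun b i)) = 0}"
  then have f: "f \<in> Hk (- int \<mu>)" and res: "\<forall>i\<in>{1..\<mu>}. fls_residue (f * neg_z (r_fun b i)) = 0" by auto
  obtain c where c: "f - Sr b \<mu> c \<in> Hk 0" using exist_c[OF f] by blast
  have "\<forall>i\<in>{1..\<mu>}. fls_residue ((f - Sr b \<mu> c) * neg_z (r_fun b i)) = 0"
    using res res_rr by (intro ballI res_r_lin) auto
  then have "f - Sr b \<mu> c \<in> Hk (int \<mu>)" by (rule G_lemma[OF c])
  moreover have "f = Sr b \<mu> c + (f - Sr b \<mu> c)" by simp
  ultimately show "f \<in> W_mu b \<mu>" unfolding W_mu_alt by blast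
qed

interpretation FV: vector_space "\<lambda>c (f::complex fls). fls_const c * f"
  by unfold_locales (simp_all add: algebra_simps flip: fls_plus_const)

lemma X_inj: "(fls_X_intpow a :: complex fls) = fls_X_intpow c \<longleftrightarrow> a = c"
proof
  assume "(fls_X_intpow a :: complex fls) = fls_X_intpow c"
  then have "(fls_X_intpow a :: complex fls) $$ a = fls_X_intpow c $$ a" by simp
  then show "a = c" by (simp split: if_splits)
qed simp

lemma indep_X: "FV.independent ((\<lambda>j. fls_X_intpow j :: complex fls) ` J)"
  unfolding FV.independent_explicit_module
proof (intro allI impI)
  fix t u v
  assume t: "finite t" "t \<subseteq> (\<lambda>j. fls_X_intpow j :: complex fls) ` J"
    and s: "(\<Sum>v\<in>t. fls_const (u v) * v) = 0" and v: "v \<in> t"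
  then obtain j where vj: "v = fls_X_intpow j" by auto
  have "0 = (\<Sum>w\<in>t. fls_const (u w) * w) $$ j" using s by simp
  also have "\<dots> = (\<Sum>w\<in>t. if w = v then u w else 0)"
    unfolding fls_nth_sum
  proof (intro sum.cong refl)
    fix w assume "w \<in> t"
    then obtain j' where wj: "w = fls_X_intpow j'" using t by auto
    show "(fls_const (u w) * w) $$ j = (if w = v then u w else 0)"
      unfolding wj vj X_inj by auto
  qed
  also have "\<dots> = u v" using t v by (simp add: sum.delta')
  finally show "u v = 0" by simp
qed

lemma const_sum: "fls_const (sum f A) = (\<Sum>i\<in>A. fls_const (f i) :: complex fls)"
  by (rule fls_eqI) (cases "finite A"; simp add: fls_nth_sum)

definition Pj :: "nat \<Rightarrow> int \<Rightarrow> complex fls \<Rightarrow> complex fls" where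
  "Pj \<mu> k f = (\<Sum>j\<in>{- int \<mu>..<0} \<union> {int \<mu>..<k}. fls_const (f $$ j) * fls_X_intpow j)"

lemma Pj_diff: "Pj \<mu> k (f - g) = Pj \<mu> k f - Pj \<mu> k g"
  unfolding Pj_def by (simp add: left_diff_distrib sum_subtractf flip: fls_minus_const)

lemma Pj_X: "j \<in> {- int \<mu>..<0} \<union> {int \<mu>..<k} \<Longrightarrow> Pj \<mu> k (fls_X_intpow j) = fls_X_intpow j"
proof -
  assume j: "j \<in> {- int \<mu>..<0} \<union> {int \<mu>..<k}"
  have "Pj \<mu> k (fls_X_intpow j) = (\<Sum>j'\<in>{- int \<mu>..<0} \<union> {int \<mu>..<k}. if j' = j then fls_X_intpow j else 0)"
    unfolding Pj_def by (intro sum.cong refl) auto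
  also have "\<dots> = fls_X_intpow j" using j by (simp add: sum.delta')
  finally show ?thesis .
qed

lemma Pj_comb: assumes "u \<in> Hk k" "int \<mu> \<le> k"
  shows "Pj \<mu> k ((\<Sum>i<n. fls_const (c i) * v i) + u) = (\<Sum>i<n. fls_const (c i) * Pj \<mu> k (v i))"
proof -
  have u0: "\<And>j. j \<in> {- int \<mu>..<0} \<union> {int \<mu>..<k} \<Longrightarrow> u $$ j = 0" using assms by (auto simp: Hk_def)
  have "Pj \<mu> k ((\<Sum>i<n. fls_const (c i) * v i) + u) =
     (\<Sum>j\<in>{- int \<mu>..<0} \<union> {int \<mu>..<k}. \<Sum>i<n. fls_const (c i) * (fls_const (v i $$ j) * fls_X_intpow j))"
    unfolding Pj_def
  proof (intro sum.cong refl)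
    fix j assume j: "j \<in> {- int \<mu>..<0} \<union> {int \<mu>..<k}"
    have "((\<Sum>i<n. fls_const (c i) * v i) + u) $$ j = (\<Sum>i<n. c i * v i $$ j)"
      using u0[OF j] by (simp add: fls_nth_sum)
    show "fls_const (((\<Sum>i<n. fls_const (c i) * v i) + u) $$ j) * fls_X_intpow j =
       (\<Sum>i<n. fls_const (c i) * (fls_const (v i $$ j) * fls_X_intpow j))"
      unfolding \<open>((\<Sum>i<n. fls_const (c i) * v i) + u) $$ j = (\<Sum>i<n. c i * v i $$ j)\<close> const_sum sum_distrib_right
      by (intro sum.cong refl) (simp only: mult.assoc flip: fls_const_mult_const)
  qed
  also have "\<dots> = (\<Sum>i<n. fls_const (c i) * Pj \<mu> k (v i))"
    unfolding Pj_def by (subst sum.swap) (simp add: sum_distrib_left)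
  finally show ?thesis .
qed

lemma Sr_in_W: "Sr b \<mu> c \<in> W_mu b \<mu>"
proof -
  have "Sr b \<mu> c = Sr b \<mu> c + 0 \<and> (0::complex fls) \<in> Hk (int \<mu>)" by (simp add: Hk_zero)
  then show ?thesis unfolding W_mu_alt by blast
qed

lemma Hk_sub_W: "Hk (int \<mu>) \<subseteq> W_mu b \<mu>"
proof
  fix h assume h: "h \<in> Hk (int \<mu>)"
  have "Sr b \<mu> (\<lambda>_. 0) = 0" by (simp add: Sr_def)
  then have "h = Sr b \<mu> (\<lambda>_. 0) + h" by simp
  with h show "h \<in> W_mu b \<mu>" unfolding W_mu_alt by blast
qed

lemma r_in_W: "i \<in> {1..\<mu>} \<Longrightarrow> r_fun b i \<in> W_mu b \<mu>"
proof -
  assume i: "i \<in> {1..\<mu>}"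
  have "\<And>k. fls_const (if k = i then 1 else 0) * r_fun b k = (if k = i then r_fun b k else 0)" by simp
  then have "Sr b \<mu> (\<lambda>k. if k = i then 1 else 0) = r_fun b i" unfolding Sr_def using i by (simp add: sum.delta)
  then show ?thesis using Sr_in_W by metis
qed

lemma lower_bound:
  assumes k: "int \<mu> \<le> k" and v: "\<forall>i<n. v i \<in> W_mu b \<mu>"
    and sp: "W_mu b \<mu> \<subseteq> {(\<Sum>i<n. fls_const (c i) * v i) + u | c u. u \<in> Hk k}"
  shows "nat k \<le> n"
proof -
  define J where "J = {- int \<mu>..<0} \<union> {int \<mu>..<k}"
  define T where "T = Pj \<mu> k ` v ` {..<n}"
  have PW: "Pj \<mu> k w \<in> FV.span T" if wW: "w \<in> W_mu b \<mu>" for w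
  proof -
    obtain c u where w: "w = (\<Sum>i<n. fls_const (c i) * v i) + u" and u: "u \<in> Hk k" using sp wW by blast
    have "Pj \<mu> k w = (\<Sum>i<n. fls_const (c i) * Pj \<mu> k (v i))" unfolding w by (rule Pj_comb[OF u k])
    also have "\<dots> \<in> FV.span T" unfolding T_def by (intro FV.span_sum FV.span_scale FV.span_base) auto
    finally show ?thesis .
  qed
  have hi: "fls_X_intpow j \<in> FV.span T" if "j \<in> {int \<mu>..<k}" for j
  proof -
    have "fls_X_intpow j \<in> W_mu b \<mu>" using that Hk_sub_W X_in_Hk by (metis atLeastLessThan_iff subsetD)
    then have "Pj \<mu> k (fls_X_intpow j) \<in> FV.span T" by (rule PW)
    moreover have "Pj \<mu> k (fls_X_intpow j) = fls_X_intpow j" using that by (intro Pj_X) auto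
    ultimately show ?thesis by simp
  qed
  have lo: "fls_X_intpow j \<in> FV.span T" if j: "j \<in> {- int \<mu>..<0}" for j
  proof -
    have "fls_X_intpow j \<in> Hk (- int \<mu>)" using j by (intro X_in_Hk) auto
    then obtain c where c: "fls_X_intpow j - Sr b \<mu> c \<in> Hk 0" using exist_c by blast
    define g where "g = fls_X_intpow j - Sr b \<mu> c"
    have 1: "Pj \<mu> k (Sr b \<mu> c) \<in> FV.span T" by (rule PW[OF Sr_in_W])
    have 2: "Pj \<mu> k g \<in> FV.span T" unfolding Pj_def
    proof (intro FV.span_sum)
      fix j' assume j': "j' \<in> {- int \<mu>..<0} \<union> {int \<mu>..<k}"
      show "fls_const (g $$ j') * fls_X_intpow j' \<in> FV.span T"
      proof (cases "j' < 0")
        case True then have "g $$ j' = 0" using c unfolding g_def Hk_def by blast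
        then show ?thesis by (simp add: FV.span_zero)
      next
        case False then have "j' \<in> {int \<mu>..<k}" using j' by auto
        then show ?thesis by (intro FV.span_scale hi)
      qed
    qed
    have "Sr b \<mu> c = fls_X_intpow j - g" by (simp add: g_def)
    then have "Pj \<mu> k (Sr b \<mu> c) = fls_X_intpow j - Pj \<mu> k g" using Pj_diff Pj_X j by simp
    then have "fls_X_intpow j = Pj \<mu> k (Sr b \<mu> c) + Pj \<mu> k g" by simp
    with 1 2 show ?thesis by (metis FV.span_add)
  qed
  have sub: "(\<lambda>j. fls_X_intpow j :: complex fls) ` J \<subseteq> FV.span T" using hi lo by (auto simp: J_def)
  have "finite T" unfolding T_def by simp
  from FV.independent_span_bound[OF this indep_X sub]
  have "card ((\<lambda>j. fls_X_intpow j :: complex fls) ` J) \<le> card T" by simp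
  moreover have "card ((\<lambda>j. fls_X_intpow j :: complex fls) ` J) = card J"
    by (rule card_image) (auto simp: inj_on_def X_inj)
  moreover have "card J = nat k" unfolding J_def using k by (subst card_Un_disjoint) auto
  moreover have "card T \<le> card (v ` {..<n})" unfolding T_def by (simp add: card_image_le)
  moreover have "card (v ` {..<n}) \<le> n" by (metis card_image_le card_lessThan finite_lessThan)
  ultimately show ?thesis by linarith
qed

lemma upper_bound:
  fixes b :: complex and \<mu> :: nat and k :: int
  assumes k: "int \<mu> \<le> k"
  defines "v \<equiv> (\<lambda>i. if i < \<mu> then r_fun b (Suc i) else fls_X_intpow (int i))"
  shows "(\<forall>i<nat k. v i \<in> W_mu b \<mu>) \<and>
     W_mu b \<mu> \<subseteq> {(\<Sum>i<nat k. fls_const (c i) * v i) + u | c u. u \<in> Hk k}"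
proof (intro conjI allI impI subsetI)
  fix i assume i: "i < nat k"
  show "v i \<in> W_mu b \<mu>"
  proof (cases "i < \<mu>")
    case True then show ?thesis by (simp add: v_def r_in_W)
  next
    case False
    then have "fls_X_intpow (int i) \<in> Hk (int \<mu>)" by (intro X_in_Hk) auto
    then show ?thesis using False Hk_sub_W by (auto simp: v_def)
  qed
next
  fix w assume "w \<in> W_mu b \<mu>"
  then obtain c h where w: "w = Sr b \<mu> c + h" and h: "h \<in> Hk (int \<mu>)" by (auto simp: W_mu_alt)
  define c' where "c' = (\<lambda>i. if i < \<mu> then c (Suc i) else h $$ int i)"
  define q where "q = (\<Sum>i\<in>{\<mu>..<nat k}. fls_const (h $$ int i) * fls_X_intpow (int i))"
  have "(\<Sum>i<nat k. fls_const (c' i) * v i) = (\<Sum>i\<in>{0..<\<mu>}. fls_const (c' i) * v i)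
      + (\<Sum>i\<in>{\<mu>..<nat k}. fls_const (c' i) * v i)"
    using k by (simp add: sum.atLeastLessThan_concat atLeast0LessThan[symmetric])
  also have "(\<Sum>i\<in>{0..<\<mu>}. fls_const (c' i) * v i) = Sr b \<mu> c"
    unfolding Sr_def One_nat_def sum.atLeast1_atMost_eq atLeast0LessThan by (intro sum.cong refl) (simp add: c'_def v_def)
  also have "(\<Sum>i\<in>{\<mu>..<nat k}. fls_const (c' i) * v i) = q"
    unfolding q_def by (intro sum.cong refl) (simp add: c'_def v_def)
  finally have e: "(\<Sum>i<nat k. fls_const (c' i) * v i) = Sr b \<mu> c + q" .
  have "h - q \<in> Hk k" unfolding Hk_def
  proof (intro CollectI allI impI)
    fix t assume t: "t < k"
    have qt: "q $$ t = (\<Sum>i\<in>{\<mu>..<nat k}. if t = int i then h $$ int i else 0)"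
      unfolding q_def fls_nth_sum by (intro sum.cong refl) simp
    show "(h - q) $$ t = 0"
    proof (cases "t < int \<mu>")
      case True
      then have "q $$ t = 0" unfolding qt by (intro sum.neutral) auto
      moreover have "h $$ t = 0" using h True by (simp add: Hk_def)
      ultimately show ?thesis by simp
    next
      case False
      then obtain m where m: "t = int m" "\<mu> \<le> m" "m < nat k" using t
        by (metis int_eq_iff nat_less_eq_zless not_le of_nat_0_le_iff of_nat_le_iff order_trans)
      have "q $$ t = (\<Sum>i\<in>{\<mu>..<nat k}. if i = m then h $$ int i else 0)"
        unfolding qt by (intro sum.cong refl) (auto simp: m(1))
      also have "\<dots> = h $$ t" using m by (simp add: sum.delta')
      finally show ?thesis by simp
    qed
  qed
  moreover have "w = (\<Sum>i<nat k. fls_const (c' i) * v i) + (h - q)" unfolding e w by simp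
  ultimately show "w \<in> {(\<Sum>i<nat k. fls_const (c i) * v i) + u | c u. u \<in> Hk k}" by blast
qed

lemma quot_dim_W: "int \<mu> \<le> k \<Longrightarrow> quot_dim (W_mu b \<mu>) (Hk k) = nat k"
  unfolding quot_dim_def
proof (rule Least_equality)
  assume k: "int \<mu> \<le> k"
  show "\<exists>v. (\<forall>i<nat k. v i \<in> W_mu b \<mu>) \<and> W_mu b \<mu> \<subseteq> {(\<Sum>i<nat k. fls_const (c i) * v i) + u |c u. u \<in> Hk k}"
    by (rule exI[of _ "\<lambda>i. if i < \<mu> then r_fun b (Suc i) else fls_X_intpow (int i)"], rule upper_bound[OF k])
  fix n :: nat assume "\<exists>v. (\<forall>i<n. v i \<in> W_mu b \<mu>) \<and> W_mu b \<mu> \<subseteq> {(\<Sum>i<n. fls_const (c i) * v i) + u |c u. u \<in> Hk k}"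
  then obtain v where vv: "(\<forall>i<n. v i \<in> W_mu b \<mu>) \<and> W_mu b \<mu> \<subseteq> {(\<Sum>i<n. fls_const (c i) * v i) + u |c u. u \<in> Hk k}" ..
  show "nat k \<le> n" by (rule lower_bound[OF k conjunct1[OF vv] conjunct2[OF vv]])
qed

lemma Hk_sub_ge: assumes "Hk k \<subseteq> W_mu b \<mu>" shows "int \<mu> \<le> k"
proof (rule ccontr)
  assume "\<not> int \<mu> \<le> k"
  then have "fls_X_intpow (int \<mu> - 1) \<in> Hk k" by (intro X_in_Hk) auto
  then have X: "fls_X_intpow (int \<mu> - 1) \<in> W_mu b \<mu>" using assms by auto
  show False
  proof (cases "\<mu> = 0")
    case True
    then have "fls_X_intpow (int \<mu> - 1) \<in> Hk 0" using X W_char[of b \<mu>] by auto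
    then show False using True unfolding Hk_def by (auto dest: spec[of _ "-1"])
  next
    case False
    have "fls_X_intpow (int \<mu> - 1) \<in> Hk 0" using False by (intro X_in_Hk) auto
    moreover have "\<forall>i\<in>{1..\<mu>}. fls_residue (fls_X_intpow (int \<mu> - 1) * neg_z (r_fun b i)) = 0"
      using X W_char[of b \<mu>] by auto
    ultimately have "fls_X_intpow (int \<mu> - 1) \<in> Hk (int \<mu>)" by (rule G_lemma)
    then show False unfolding Hk_def by (auto dest: spec[of _ "int \<mu> - 1"])
  qed
qed

lemma W_lin: "is_lin_subspace (W_mu b \<mu>)"
  unfolding is_lin_subspace_def W_char
  by (auto simp: Hk_zero Hk_add Hk_scale distrib_right mult.assoc)

lemma W_Gr: "W_mu b \<mu> \<in> Gr"
  unfolding Gr_def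
proof (intro CollectI conjI exI)
  show "is_lin_subspace (W_mu b \<mu>)" by (rule W_lin)
  show "int \<mu> + 1 > - int \<mu>" by simp
  have "Hk (int \<mu> + 1) \<subseteq> Hk (int \<mu>)" by (auto simp: Hk_def)
  then show "Hk (int \<mu> + 1) \<subseteq> W_mu b \<mu>" using Hk_sub_W[of \<mu> b] by (rule subset_trans)
  show "W_mu b \<mu> \<subseteq> Hk (- int \<mu>)" using W_char by blast
qed

theorem proposition2:
  fixes b :: complex and \<mu> :: nat
  assumes "b \<noteq> 0" and "b \<noteq> 1"
  shows "W_mu b \<mu> \<in> Gr_j 0
    \<and> CKP (W_mu b \<mu>)
    \<and> W_mu b \<mu> = {f \<in> Hk (- int \<mu>). \<forall>i\<in>{1..\<mu>}. fls_residue (f * neg_z (r_fun b i)) = 0}"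
proof (intro conjI)
  show "W_mu b \<mu> \<in> Gr_j 0" unfolding Gr_j_def
  proof (intro CollectI conjI allI impI W_Gr)
    fix k assume "Hk k \<subseteq> W_mu b \<mu>"
    then have k: "int \<mu> \<le> k" by (rule Hk_sub_ge)
    show "0 = k - int (quot_dim (W_mu b \<mu>) (Hk k))" using quot_dim_W[OF k] k by simp
  qed
  show "CKP (W_mu b \<mu>)" unfolding CKP_def using W_CKP by blast
  show "W_mu b \<mu> = {f \<in> Hk (- int \<mu>). \<forall>i\<in>{1..\<mu>}. fls_residue (f * neg_z (r_fun b i)) = 0}"
    by (rule W_char)
qed

end
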